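(* For every $m\in\mathbb{N}$, the matrix \[ \mathrm{B}_m=\begin{pmatrix} 1 & m & 2m & m\\ 0 & 1 & 3 & 3\\ 0 & 0 & 1 & 3\\ 0 & 0 & 0 & 1 \end{pmatrix} \] is mutation equivalent to the matrix \[ \mathrm{B}'_m=\begin{pmatrix} 1 & 3 & 6 & m\\ 0 & 1 & 3 & m\\ 0 & 0 & 1 & m\\ 0 & 0 & 0 & 1 \end{pmatrix}. \]
   Context: An upper unitriangular integer $n\times n$ matrix $M$ is viewed as the Gram matrix $M_{ij}=\langle e_i,e_j\rangle$ of a bilinear form on $\mathbb{Z}^n$ with respect to an ordered basis $(e_1,\dots,e_n)$. The signed braid group $\Sigma\mathrm{B}_n=\mathrm{B}_n\rtimes(\mathbb{Z}/2\mathbb{Z})^n$, with generators $\sigma_1,\dots,\sigma_{n-1}$ and $\epsilon_1,\dots,\epsilon_n$, acts on such ordered bases: $\sigma_i$ sends $(e_1,\dots,e_n)$ to $(e_1,\dots,e_{i-1},e_{i+1}-\langle e_i,e_{i+1}\rangle e_i,e_i,e_{i+2},\dots,e_n)$, and $\epsilon_i$ replaces $e_i$ by $-e_i$. Two matrices are mutation equivalent if one is the Gram matrix of a basis obtained from a basis with the other Gram matrix by the action of an element of $\Sigma\mathrm{B}_n$. *)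

theory Defs
  imports Main
begin

text \<open>Vectors of Z^n are functions nat => int (coordinates 0..n-1 used);
  n x n integer matrices are functions nat => nat => int (entries i,j < n used);
  an ordered family of n vectors is a function nat => (nat => int).\<close>

type_synonym zvec = "nat \<Rightarrow> int"
type_synonym zmat = "nat \<Rightarrow> nat \<Rightarrow> int"

definition list_mat :: "int list list \<Rightarrow> zmat" where
  "list_mat xss i j = xss ! i ! j"

definition bil :: "nat \<Rightarrow> zmat \<Rightarrow> zvec \<Rightarrow> zvec \<Rightarrow> int" where
  "bil n M x y = (\<Sum>i<n. \<Sum>j<n. x i * M i j * y j)"

definition std_basis :: "nat \<Rightarrow> zvec" where
  "std_basis i = (\<lambda>k. if k = i then 1 else 0)"

definition gram :: "nat \<Rightarrow> zmat \<Rightarrow> (nat \<Rightarrow> zvec) \<Rightarrow> zmat" where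
  "gram n M b = (\<lambda>i j. bil n M (b i) (b j))"

text \<open>Generators of the signed braid group (0-based indices):
  Sig i = sigma_(i+1), SigInv i = its inverse, Eps i = epsilon_(i+1).\<close>
datatype gen = Sig nat | SigInv nat | Eps nat

fun valid_gen :: "nat \<Rightarrow> gen \<Rightarrow> bool" where
  "valid_gen n (Sig i) = (i + 1 < n)"
| "valid_gen n (SigInv i) = (i + 1 < n)"
| "valid_gen n (Eps i) = (i < n)"

fun act_gen :: "nat \<Rightarrow> zmat \<Rightarrow> gen \<Rightarrow> (nat \<Rightarrow> zvec) \<Rightarrow> (nat \<Rightarrow> zvec)" where
  "act_gen n M (Sig i) b =
     (\<lambda>k. if k = i then (\<lambda>t. b (i+1) t - bil n M (b i) (b (i+1)) * b i t)
          else if k = i + 1 then b i else b k)"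
| "act_gen n M (SigInv i) b =
     (\<lambda>k. if k = i then b (i+1)
          else if k = i + 1 then (\<lambda>t. b i t - bil n M (b i) (b (i+1)) * b (i+1) t)
          else b k)"
| "act_gen n M (Eps i) b = (\<lambda>k. if k = i then (\<lambda>t. - b i t) else b k)"

definition act_word :: "nat \<Rightarrow> zmat \<Rightarrow> gen list \<Rightarrow> (nat \<Rightarrow> zvec) \<Rightarrow> (nat \<Rightarrow> zvec)" where
  "act_word n M w b = fold (act_gen n M) w b"

definition obtained_from :: "nat \<Rightarrow> zmat \<Rightarrow> zmat \<Rightarrow> bool" where
  "obtained_from n M N \<longleftrightarrow>
     (\<exists>w. (\<forall>g\<in>set w. valid_gen n g) \<and>
          (\<forall>i<n. \<forall>j<n. gram n M (act_word n M w std_basis) i j = N i j))"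

definition mutation_equivalent :: "nat \<Rightarrow> zmat \<Rightarrow> zmat \<Rightarrow> bool" where
  "mutation_equivalent n M N \<longleftrightarrow> obtained_from n M N \<or> obtained_from n N M"

end

theory Submission
  imports Defs
begin

definition vec :: "int \<Rightarrow> int \<Rightarrow> int \<Rightarrow> int \<Rightarrow> zvec" where
  "vec a b c d = (\<lambda>t. if t = 0 then a else if t = 1 then b else if t = 2 then c
                       else if t = 3 then d else 0)"

definition bas :: "zvec \<Rightarrow> zvec \<Rightarrow> zvec \<Rightarrow> zvec \<Rightarrow> nat \<Rightarrow> zvec" where
  "bas v0 v1 v2 v3 = (\<lambda>k. if k = 0 then v0 else if k = 1 then v1 else if k = 2 then v2
                       else if k = 3 then v3 else std_basis k)"

lemma sum4: "(\<Sum>i<(4::nat). f i) = f 0 + f 1 + f 2 + (f 3 :: int)"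
  by (simp add: numeral_eq_Suc)

abbreviation MM :: "nat \<Rightarrow> zmat" where
  "MM m \<equiv> list_mat [[1, int m, 2 * int m, int m],
                [0, 1, 3, 3],
                [0, 0, 1, 3],
                [0, 0, 0, 1]]"

lemma bil_vec: "bil 4 (MM m) (vec a b c d) (vec a' b' c' d') =
   a*a' + a*int m*b' + a*2*int m*c' + a*int m*d' + b*b' + b*3*c' + b*3*d' + c*c' + c*3*d' + d*d'"
  by (simp add: bil_def sum4 vec_def list_mat_def algebra_simps)

lemma std: "std_basis = bas (vec 1 0 0 0) (vec 0 1 0 0) (vec 0 0 1 0) (vec 0 0 0 1)"
  by (auto simp: bas_def vec_def std_basis_def fun_eq_iff)

lemma vneg: "(\<lambda>t. - vec a b c d t) = vec (-a) (-b) (-c) (-d)"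
  by (auto simp: vec_def fun_eq_iff)

lemma vlin: "(\<lambda>t. vec a b c d t - x * vec a' b' c' d' t) = vec (a - x*a') (b - x*b') (c - x*c') (d - x*d')"
  by (auto simp: vec_def fun_eq_iff)

lemma s0: "act_gen 4 M (Sig 0) (bas v0 v1 v2 v3) =
   bas (\<lambda>t. v1 t - bil 4 M v0 v1 * v0 t) v0 v2 v3"
  by (auto simp: bas_def fun_eq_iff)
lemma s1: "act_gen 4 M (Sig 1) (bas v0 v1 v2 v3) =
   bas v0 (\<lambda>t. v2 t - bil 4 M v1 v2 * v1 t) v1 v3"
  by (auto simp: bas_def fun_eq_iff)
lemma s2: "act_gen 4 M (Sig 2) (bas v0 v1 v2 v3) =
   bas v0 v1 (\<lambda>t. v3 t - bil 4 M v2 v3 * v2 t) v2"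
  by (auto simp: bas_def fun_eq_iff)
lemma e0: "act_gen 4 M (Eps 0) (bas v0 v1 v2 v3) = bas (\<lambda>t. - v0 t) v1 v2 v3"
  by (auto simp: bas_def fun_eq_iff)
lemma e3: "act_gen 4 M (Eps 3) (bas v0 v1 v2 v3) = bas v0 v1 v2 (\<lambda>t. - v3 t)"
  by (auto simp: bas_def fun_eq_iff)

lemma final: "act_word 4 (MM m) [Sig 0, Sig 1, Sig 0, Sig 2, Eps 0, Eps 3] std_basis =
  bas (vec (- int m) 3 (-1) 0) (vec (- int m) 1 0 0) (vec (- int m) 0 0 1) (vec (-1) 0 0 0)"
  unfolding act_word_def std
  apply (simp only: fold_simps s0 s1 s2 e0 e3 vneg vlin bil_vec)
  apply simp
  done

lemma lt4: "(i::nat) < 4 \<longleftrightarrow> i = 0 \<or> i = 1 \<or> i = 2 \<or> i = 3" by auto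

theorem proposition2p13:
  fixes m :: nat
  shows "mutation_equivalent 4
     (list_mat [[1, int m, 2 * int m, int m],
                [0, 1, 3, 3],
                [0, 0, 1, 3],
                [0, 0, 0, 1]])
     (list_mat [[1, 3, 6, int m],
                [0, 1, 3, int m],
                [0, 0, 1, int m],
                [0, 0, 0, 1]])"
  unfolding mutation_equivalent_def obtained_from_def
  apply (rule disjI1)
  apply (rule exI[of _ "[Sig 0, Sig 1, Sig 0, Sig 2, Eps 0, Eps 3]"])
  apply (simp only: final gram_def)
  apply (simp only: lt4)
  apply (simp add: bas_def bil_vec list_mat_def disj_imp all_conj_distrib)
  done

end
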